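(* Let $n\ge 1$ and let $\omega_1,\dots,\omega_n>0$ be pairwise distinct, and let $z_i=2/\omega_i$. Consider on the $n$-torus $\mathbb{T}^n=(\mathbb{R}/2\pi\mathbb{Z})^n$ the control system $$\dot\theta_i=\omega_i+z_i(1-\cos\theta_i)\,u(t),\qquad i=1,\dots,n,$$ with a common real-valued, amplitude-unconstrained input $u$. Then this system is controllable: for every $\Theta_0,\Theta_1\in\mathbb{T}^n$ there exist $T\ge0$ and an admissible control $u$ on $[0,T]$ steering $\Theta(0)=\Theta_0$ to $\Theta(T)=\Theta_1$.
   Context: This is an ensemble of uncoupled neurons described by the SNIPER phase model: baseline dynamics $f(\theta)=\omega$ (natural frequency) and phase response curve $Z(\theta)=z(1-\cos\theta)$. *)

theory Defs
  imports Complex_Main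
begin

text \<open>States of the n-torus are represented by real representatives
  \<open>'n \<Rightarrow> real\<close> (index type \<open>'n\<close> finite, n = CARD('n));
  two representatives denote the same point of the torus iff they agree
  componentwise modulo 2 pi.\<close>
definition torus_eq :: "('n \<Rightarrow> real) \<Rightarrow> ('n \<Rightarrow> real) \<Rightarrow> bool" where
  "torus_eq x y \<longleftrightarrow> (\<forall>i. \<exists>k::int. x i - y i = 2 * pi * real_of_int k)"

text \<open>Admissible controls on [0,T]: piecewise constant real-valued functions
  (finitely many switching times; values at switching times irrelevant).
  No amplitude constraint.\<close>
definition admissible_control :: "real \<Rightarrow> (real \<Rightarrow> real) \<Rightarrow> bool" where
  "admissible_control T u \<longleftrightarrow>
     (\<exists>S. finite S \<and> 0 \<in> S \<and> T \<in> S \<and> S \<subseteq> {0..T} \<and>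
        (\<forall>a\<in>S. \<forall>b\<in>S. a < b \<and> {a<..<b} \<inter> S = {} \<longrightarrow>
            (\<exists>c. \<forall>t\<in>{a<..<b}. u t = c)))"

definition sniper_trajectory ::
  "('n \<Rightarrow> real) \<Rightarrow> ('n \<Rightarrow> real) \<Rightarrow> (real \<Rightarrow> real) \<Rightarrow> real \<Rightarrow> (real \<Rightarrow> 'n \<Rightarrow> real) \<Rightarrow> bool"
where
  "sniper_trajectory \<omega> z u T \<theta> \<longleftrightarrow>
     (\<forall>i. continuous_on {0..T} (\<lambda>t. \<theta> t i)) \<and>
     (\<exists>S. finite S \<and> (\<forall>t\<in>{0<..<T} - S. \<forall>i.
        ((\<lambda>s. \<theta> s i) has_real_derivative
           (\<omega> i + z i * (1 - cos (\<theta> t i)) * u t)) (at t)))"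

end

theory Submission
  imports Defs "HOL-Analysis.Analysis"
begin


definition den :: "real \<Rightarrow> real \<Rightarrow> real" where
  "den r p = (r + 1) + (1 - r) * cos p"

lemma den_pos: "r > 0 \<Longrightarrow> den r p > 0"
proof -
  assume r: "r > 0"
  have "\<bar>(1 - r) * cos p\<bar> \<le> \<bar>1 - r\<bar>"
    by (simp add: abs_mult mult_left_le)
  thus ?thesis using r unfolding den_def by (cases "r \<le> 1") (auto simp: abs_if split: if_splits)
qed

definition Gf :: "real \<Rightarrow> real \<Rightarrow> real" where
  "Gf r p = p + 2 * arctan ((r - 1) * sin p / den r p)"

lemma Gf_bound: "\<bar>Gf r p - p\<bar> < pi"
  using arctan_bounded[of "(r - 1) * sin p / den r p"] unfolding Gf_def by auto

definition Qd :: "real \<Rightarrow> real \<Rightarrow> real" where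
  "Qd r p = (1 + r\<^sup>2) + (1 - r\<^sup>2) * cos p"

lemma Qd_eq: "den r p ^ 2 + ((r - 1) * sin p) ^ 2 = 2 * Qd r p"
proof -
  have g: "\<And>s k::real. s^2 + k^2 = 1 \<Longrightarrow> ((r + 1) + (1 - r) * k) ^ 2 + ((r - 1) * s) ^ 2 = 2 * ((1 + r\<^sup>2) + (1 - r\<^sup>2) * k)"
    by algebra
  show ?thesis unfolding den_def Qd_def by (rule g) simp
qed

lemma Qd_pos: "r > 0 \<Longrightarrow> Qd r p > 0"
proof -
  assume r: "r > 0"
  have "den r p ^ 2 > 0" using den_pos[OF r, of p] by (metis zero_less_power)
  moreover have "((r - 1) * sin p) ^ 2 \<ge> 0" by simp
  ultimately show ?thesis using Qd_eq[of r p] by linarith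
qed

lemma Gf_deriv:
  assumes r: "r > 0"
  shows "(Gf r has_real_derivative (2 * r / Qd r p)) (at p)"
proof -
  have D: "den r p \<noteq> 0" using den_pos[OF r, of p] by linarith
  have "(Gf r has_real_derivative
     1 + 2 * (inverse (1 + ((r - 1) * sin p / den r p)\<^sup>2) *
      (((r - 1) * cos p * den r p - (r - 1) * sin p * ((1 - r) * - sin p)) / (den r p * den r p))))
     (at p)"
    unfolding Gf_def den_def
    using D unfolding den_def
    by (auto intro!: derivative_eq_intros)
  moreover have "1 + 2 * (inverse (1 + ((r - 1) * sin p / den r p)\<^sup>2) *
      (((r - 1) * cos p * den r p - (r - 1) * sin p * ((1 - r) * - sin p)) / (den r p * den r p)))
      = 2 * r / Qd r p"
  proof -
    have Q: "Qd r p > 0" using Qd_pos[OF r] .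
    have s: "sin p ^ 2 = 1 - cos p ^ 2" by (simp add: sin_squared_eq)
    have e1: "1 + ((r - 1) * sin p / den r p)\<^sup>2 = 2 * Qd r p / (den r p)^2"
      using Qd_eq[of r p] D by (simp add: field_simps power2_eq_square)
    have g: "\<And>s k::real. s^2 + k^2 = 1 \<Longrightarrow> (r - 1) * k * ((r + 1) + (1 - r) * k) - (r - 1) * s * ((1 - r) * - s) 
              = (r - 1) * ((r + 1) * k + (1 - r))" by algebra
    have e2: "(r - 1) * cos p * den r p - (r - 1) * sin p * ((1 - r) * - sin p) 
              = (r - 1) * ((r + 1) * cos p + (1 - r))"
      unfolding den_def by (rule g) simp
    have "1 + 2 * (inverse (2 * Qd r p / (den r p)^2) * ((r - 1) * ((r + 1) * cos p + (1 - r)) / (den r p * den r p)))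
       = 1 + (r - 1) * ((r + 1) * cos p + (1 - r)) / Qd r p"
      using D Q by (simp add: field_simps power2_eq_square)
    also have "\<dots> = 2 * r / Qd r p"
    proof -
      have "Qd r p + (r - 1) * ((r + 1) * cos p + (1 - r)) = 2 * r"
        unfolding Qd_def by (simp add: algebra_simps power2_eq_square)
      thus ?thesis using Q by (simp add: field_simps)
    qed
    finally show ?thesis unfolding e1 e2 .
  qed
  ultimately show ?thesis by simp
qed

lemma cos_2arctan: "cos (2 * arctan y) = (1 - y\<^sup>2) / (1 + y\<^sup>2)"
proof -
  have q: "sqrt (1 + y\<^sup>2) ^ 2 = 1 + y\<^sup>2" by (simp add: add_pos_nonneg)
  have "cos (2 * arctan y) = cos (arctan y)^2 - sin (arctan y)^2" by (rule cos_double)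
  also have "\<dots> = (1 - y\<^sup>2) / (1 + y\<^sup>2)" unfolding cos_arctan sin_arctan power_divide q
    using add_pos_nonneg[OF zero_less_one zero_le_power2[of y]] by (simp add: field_simps)
  finally show ?thesis .
qed

lemma sin_2arctan: "sin (2 * arctan y) = 2 * y / (1 + y\<^sup>2)"
proof -
  have q: "sqrt (1 + y\<^sup>2) * sqrt (1 + y\<^sup>2) = 1 + y\<^sup>2" by (simp add: add_pos_nonneg)
  have "sin (2 * arctan y) = 2 * sin (arctan y) * cos (arctan y)" by (rule sin_double)
  also have "\<dots> = 2 * y / (1 + y\<^sup>2)" unfolding cos_arctan sin_arctan
    by (simp add: q)
  finally show ?thesis .
qed

lemma cos_Gf:
  assumes r: "r > 0"
  shows "1 - cos (Gf r p) = 2 * r\<^sup>2 * (1 - cos p) / Qd r p"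
proof -
  define y where "y = (r - 1) * sin p / den r p"
  have D: "den r p \<noteq> 0" using den_pos[OF r, of p] by linarith
  have Q: "Qd r p > 0" using Qd_pos[OF r] .
  have e1: "1 + y\<^sup>2 = 2 * Qd r p / (den r p)^2"
    using Qd_eq[of r p] D unfolding y_def by (simp add: field_simps power2_eq_square)
  have "cos (Gf r p) = cos p * ((1 - y\<^sup>2) / (1 + y\<^sup>2)) - sin p * (2 * y / (1 + y\<^sup>2))"
    unfolding Gf_def y_def[symmetric] by (simp add: cos_add cos_2arctan sin_2arctan)
  also have "\<dots> = (cos p * ((den r p)^2 - ((r-1) * sin p)^2) - 2 * sin p * ((r - 1) * sin p) * den r p) / (2 * Qd r p)"
  proof -
    have a: "(1 - y\<^sup>2) / (1 + y\<^sup>2) = ((den r p)^2 - ((r-1) * sin p)^2) / (2 * Qd r p)"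
      unfolding e1 using D Q by (simp add: y_def field_simps power2_eq_square)
    have b: "2 * y / (1 + y\<^sup>2) = 2 * ((r - 1) * sin p) * den r p / (2 * Qd r p)"
      unfolding e1 using D Q by (simp add: y_def field_simps power2_eq_square)
    show ?thesis unfolding a b using Q by (simp add: field_simps)
  qed
  also have "\<dots> = 1 - 2 * r\<^sup>2 * (1 - cos p) / Qd r p"
  proof -
    have s: "sin p ^ 2 = 1 - cos p ^ 2" by (simp add: sin_squared_eq)
    have g: "\<And>s k::real. s^2 + k^2 = 1 \<Longrightarrow> k * (((r + 1) + (1 - r) * k)^2 - ((r-1) * s)^2) - 2 * s * ((r - 1) * s) * ((r + 1) + (1 - r) * k)
          = 2 * ((1 + r\<^sup>2) + (1 - r\<^sup>2) * k) - 4 * r\<^sup>2 * (1 - k)" by algebra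
    have "cos p * ((den r p)^2 - ((r-1) * sin p)^2) - 2 * sin p * ((r - 1) * sin p) * den r p
          = 2 * Qd r p - 4 * r\<^sup>2 * (1 - cos p)"
      unfolding den_def Qd_def by (rule g) simp
    hence h: "(cos p * ((den r p)^2 - ((r-1) * sin p)^2) - 2 * sin p * ((r - 1) * sin p) * den r p) / (2 * Qd r p)
      = (2 * Qd r p - 4 * r\<^sup>2 * (1 - cos p)) / (2 * Qd r p)" by simp
    show ?thesis unfolding h using Q by (simp add: field_simps)
  qed
  finally show ?thesis by simp
qed

lemma Gf_isCont: "r > 0 \<Longrightarrow> isCont (Gf r) p"
  using Gf_deriv DERIV_isCont by blast

lemma Gf_strict: assumes r: "r > 0" and ab: "a < b" shows "Gf r a < Gf r b"
proof -
  have "\<And>x. a \<le> x \<Longrightarrow> x \<le> b \<Longrightarrow> \<exists>y. DERIV (Gf r) x :> y \<and> y > 0"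
    using Gf_deriv[OF r] Qd_pos[OF r] r by (meson divide_pos_pos mult_pos_pos zero_less_numeral)
  thus ?thesis by (rule DERIV_pos_imp_increasing[OF ab])
qed

lemma Gf_surj: assumes r: "r > 0" shows "\<exists>p. Gf r p = x"
proof -
  have "Gf r (x - pi) \<le> x" using Gf_bound[of r "x - pi"] by linarith
  moreover have "x \<le> Gf r (x + pi)" using Gf_bound[of r "x + pi"] by linarith
  ultimately show ?thesis using IVT[of "Gf r" "x - pi" x "x + pi"] Gf_isCont[OF r] by auto
qed

lemma Gf_inj: "r > 0 \<Longrightarrow> Gf r a = Gf r b \<Longrightarrow> a = b"
  by (metis Gf_strict less_irrefl linorder_neqE_linordered_idom)

definition Ginv :: "real \<Rightarrow> real \<Rightarrow> real" where
  "Ginv r x = (THE p. Gf r p = x)"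

lemma Gf_Ginv: "r > 0 \<Longrightarrow> Gf r (Ginv r x) = x"
  unfolding Ginv_def by (rule theI') (use Gf_surj Gf_inj in blast)

lemma Ginv_Gf: "r > 0 \<Longrightarrow> Ginv r (Gf r p) = p"
  using Gf_Ginv Gf_inj by blast

lemma Ginv_bound: "r > 0 \<Longrightarrow> \<bar>Ginv r x - x\<bar> < pi"
  using Gf_bound[of r "Ginv r x"] Gf_Ginv[of r x] by auto

lemma Ginv_isCont: assumes r: "r > 0" shows "isCont (Ginv r) x"
proof -
  have "isCont (Ginv r) (Gf r (Ginv r x))"
    by (rule isCont_inverse_function[of 1]) (use r Ginv_Gf Gf_isCont in auto)
  thus ?thesis using Gf_Ginv[OF r] by simp
qed

definition nu :: "real \<Rightarrow> real \<Rightarrow> real" where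
  "nu w c = sqrt (w\<^sup>2 + 4 * c)"

definition Fl :: "real \<Rightarrow> real \<Rightarrow> real \<Rightarrow> real \<Rightarrow> real" where
  "Fl w c t x = Gf (w / nu w c) (nu w c * t + Ginv (w / nu w c) x)"

lemma Fl_0: "w > 0 \<Longrightarrow> w\<^sup>2 + 4 * c > 0 \<Longrightarrow> Fl w c 0 x = x"
  unfolding Fl_def nu_def by (simp add: Gf_Ginv)

lemma Fl_deriv:
  assumes w: "w > 0" and c: "w\<^sup>2 + 4 * c > 0"
  shows "((\<lambda>t. Fl w c t x) has_real_derivative (w + 2 / w * (1 - cos (Fl w c t x)) * c)) (at t)"
proof -
  define n where "n = nu w c"
  define r where "r = w / n"
  define a where "a = n * t + Ginv r x"
  have n: "n > 0" unfolding n_def nu_def using c by simp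
  have n2: "n\<^sup>2 = w\<^sup>2 + 4 * c" unfolding n_def nu_def using c by simp
  have r: "r > 0" unfolding r_def using n w by simp
  have Q: "Qd r a > 0" using Qd_pos[OF r] .
  have h: "((\<lambda>t. n * t + Ginv r x) has_real_derivative n) (at t)"
    by (auto intro!: derivative_eq_intros)
  have d: "(Gf r has_real_derivative 2*r/Qd r a) (at ((\<lambda>t. n * t + Ginv r x) t))"
    using Gf_deriv[OF r, of a] by (simp add: a_def)
  have "((\<lambda>t. Gf r (n * t + Ginv r x)) has_real_derivative (2 * r / Qd r a * n)) (at t)"
    using DERIV_chain2[OF d h] .
  moreover have "2 * r / Qd r a * n = w + 2 / w * (1 - cos (Gf r a)) * c"
  proof -
    have k: "1 - cos (Gf r a) = 2 * r\<^sup>2 * (1 - cos a) / Qd r a" using cos_Gf[OF r] .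
    have e: "n\<^sup>2 * Qd r a + (1 - cos a) * (n\<^sup>2 - w\<^sup>2) = 2 * n\<^sup>2"
      unfolding Qd_def r_def using n by (simp add: field_simps power2_eq_square)
    have c4: "4 * c = n\<^sup>2 - w\<^sup>2" using n2 by simp
    have s0: "2 / w * (1 - cos (Gf r a)) * c = 2 / w * (2 * r\<^sup>2 * (1 - cos a) / Qd r a) * c"
      using k by simp
    have s01: "2 / w * (2 * r\<^sup>2 * (1 - cos a) / Qd r a) * c = 4 * w * (1 - cos a) * c / (n\<^sup>2 * Qd r a)"
    proof -
      have rr: "r\<^sup>2 = w\<^sup>2 / n\<^sup>2" unfolding r_def by (simp add: power_divide)
      show ?thesis unfolding rr using n w Q by (simp add: field_simps power2_eq_square)
    qed
    have s1: "w + 2 / w * (1 - cos (Gf r a)) * c = w + 4 * w * (1 - cos a) * c / (n\<^sup>2 * Qd r a)"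
      using s0 s01 by simp
    have s2: "2 * r / Qd r a * n = 2 * w / Qd r a" unfolding r_def using n by simp
    have s3: "2 * w / Qd r a = w + 4 * w * (1 - cos a) * c / (n\<^sup>2 * Qd r a)"
    proof -
      have "4 * c * (1 - cos a) = (n\<^sup>2 - w\<^sup>2) * (1 - cos a)" using c4 by simp
      hence "2 * n\<^sup>2 = n\<^sup>2 * Qd r a + 4 * c * (1 - cos a)" using e by (simp add: algebra_simps)
      hence "w * (2 * n\<^sup>2) = w * (n\<^sup>2 * Qd r a + 4 * c * (1 - cos a))" by simp
      hence "2 * w * n\<^sup>2 = w * (n\<^sup>2 * Qd r a) + 4 * w * (1 - cos a) * c" by (simp add: algebra_simps)
      thus ?thesis using n w Q by (simp add: field_simps)
    qed
    show ?thesis unfolding s1 s2 s3 ..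
  qed
  ultimately show ?thesis unfolding Fl_def n_def[symmetric] r_def[symmetric] a_def by simp
qed

lemma Fl_bound:
  assumes w: "w > 0" and c: "w\<^sup>2 + 4 * c > 0"
  shows "\<bar>Fl w c t x - x - nu w c * t\<bar> \<le> 2 * pi"
proof -
  have r: "w / nu w c > 0" unfolding nu_def using w c by simp
  show ?thesis using Gf_bound[of "w / nu w c" "nu w c * t + Ginv (w / nu w c) x"] Ginv_bound[OF r, of x]
    unfolding Fl_def by linarith
qed

lemma Fl_cont:
  fixes f g :: "'a::topological_space \<Rightarrow> real"
  assumes w: "w > 0" and c: "w\<^sup>2 + 4 * c > 0"
    and f: "continuous_on UNIV f" and g: "continuous_on UNIV g"
  shows "continuous_on UNIV (\<lambda>y. Fl w c (f y) (g y))"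
proof -
  have r: "w / nu w c > 0" unfolding nu_def using w c by simp
  have cG: "continuous_on UNIV (Gf (w / nu w c))" using Gf_isCont[OF r] by (simp add: continuous_on_eq_continuous_at)
  have cI: "continuous_on UNIV (Ginv (w / nu w c))" using Ginv_isCont[OF r] by (simp add: continuous_on_eq_continuous_at)
  have "continuous_on UNIV (\<lambda>y. nu w c * f y + Ginv (w / nu w c) (g y))"
    by (intro continuous_intros f continuous_on_compose2[OF cI g]) auto
  thus ?thesis unfolding Fl_def by (rule continuous_on_compose2[OF cG]) auto
qed



lemma concat_adm:
  assumes a1: "admissible_control T1 u1" and a2: "admissible_control T2 u2"
  shows "admissible_control (T1+T2) (\<lambda>t. if t \<le> T1 then u1 t else u2 (t - T1))"
proof -
  obtain S1 where S1: "finite S1" "0 \<in> S1" "T1 \<in> S1" "S1 \<subseteq> {0..T1}"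
    and P1: "\<forall>a\<in>S1. \<forall>b\<in>S1. a < b \<and> {a<..<b} \<inter> S1 = {} \<longrightarrow> (\<exists>c. \<forall>t\<in>{a<..<b}. u1 t = c)"
    using a1 unfolding admissible_control_def by blast
  obtain S2 where S2: "finite S2" "0 \<in> S2" "T2 \<in> S2" "S2 \<subseteq> {0..T2}"
    and P2: "\<forall>a\<in>S2. \<forall>b\<in>S2. a < b \<and> {a<..<b} \<inter> S2 = {} \<longrightarrow> (\<exists>c. \<forall>t\<in>{a<..<b}. u2 t = c)"
    using a2 unfolding admissible_control_def by blast
  have T1: "T1 \<ge> 0" and T2: "T2 \<ge> 0" using S1 S2 by auto
  define S where "S = S1 \<union> (\<lambda>s. s + T1) ` S2"
  let ?u = "\<lambda>t. if t \<le> T1 then u1 t else u2 (t - T1)"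
  have "finite S" unfolding S_def using S1 S2 by auto
  moreover have "0 \<in> S" unfolding S_def using S1 by auto
  moreover have "T1 + T2 \<in> S" unfolding S_def using S2 by force
  moreover have "S \<subseteq> {0..T1+T2}" unfolding S_def using S1 S2 T1 T2 by auto
  moreover have "\<forall>a\<in>S. \<forall>b\<in>S. a < b \<and> {a<..<b} \<inter> S = {} \<longrightarrow> (\<exists>c. \<forall>t\<in>{a<..<b}. ?u t = c)"
  proof (intro ballI impI)
    fix a b assume a: "a \<in> S" and b: "b \<in> S" and ab: "a < b \<and> {a<..<b} \<inter> S = {}"
    have T1S: "T1 \<in> S" unfolding S_def using S1 by auto
    hence "T1 \<notin> {a<..<b}" using ab by blast
    hence "b \<le> T1 \<or> T1 \<le> a" by auto
    thus "\<exists>c. \<forall>t\<in>{a<..<b}. ?u t = c"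
    proof
      assume bT: "b \<le> T1"
      have aS1: "a \<in> S1"
      proof (rule ccontr)
        assume "a \<notin> S1"
        then obtain s where "s \<in> S2" "a = s + T1" using a unfolding S_def by auto
        moreover have "s \<ge> 0" using S2(4) \<open>s \<in> S2\<close> by auto
        ultimately show False using ab bT by auto
      qed
      have bS1: "b \<in> S1"
      proof (rule ccontr)
        assume "b \<notin> S1"
        then obtain s where "s \<in> S2" "b = s + T1" using b unfolding S_def by auto
        moreover have "s \<ge> 0" using S2(4) \<open>s \<in> S2\<close> by auto
        ultimately have "b = T1" using bT by auto
        thus False using \<open>b \<notin> S1\<close> S1(3) by simp
      qed
      have "{a<..<b} \<inter> S1 = {}" using ab unfolding S_def by auto
      then obtain c where "\<forall>t\<in>{a<..<b}. u1 t = c" using P1 aS1 bS1 ab by blast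
      thus ?thesis using bT by (intro exI[of _ c]) auto
    next
      assume aT: "T1 \<le> a"
      have aS2: "a - T1 \<in> S2"
      proof (cases "a \<in> S1")
        case True hence "a = T1" using aT S1(4) by auto
        thus ?thesis using S2 by simp
      next
        case False thus ?thesis using a unfolding S_def by auto
      qed
      have bS2: "b - T1 \<in> S2"
      proof (cases "b \<in> S1")
        case True hence "b \<le> T1" using S1(4) by auto
        thus ?thesis using aT ab by simp
      next
        case False thus ?thesis using b unfolding S_def by auto
      qed
      have "{a - T1<..<b - T1} \<inter> S2 = {}"
      proof (rule ccontr)
        assume "{a - T1<..<b - T1} \<inter> S2 \<noteq> {}"
        then obtain s where "s \<in> S2" "a - T1 < s" "s < b - T1" by auto
        hence "s + T1 \<in> {a<..<b} \<inter> S" unfolding S_def by auto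
        thus False using ab by blast
      qed
      then obtain c where c: "\<forall>t\<in>{a - T1<..<b - T1}. u2 t = c" using P2 aS2 bS2 ab by force
      show ?thesis
      proof (intro exI[of _ c] ballI)
        fix t assume "t \<in> {a<..<b}"
        thus "?u t = c" using c aT by auto
      qed
    qed
  qed
  ultimately show ?thesis unfolding admissible_control_def by blast
qed

lemma concat_traj:
  assumes t1: "sniper_trajectory \<omega> z u1 T1 \<theta>1" and t2: "sniper_trajectory \<omega> z u2 T2 \<theta>2"
    and eq: "\<theta>2 0 = \<theta>1 T1" and T1: "T1 \<ge> 0" and T2: "T2 \<ge> 0"
  shows "sniper_trajectory \<omega> z (\<lambda>t. if t \<le> T1 then u1 t else u2 (t - T1)) (T1+T2)
           (\<lambda>t. if t \<le> T1 then \<theta>1 t else \<theta>2 (t - T1))"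
proof -
  obtain S1 where S1: "finite S1" and D1: "\<forall>t\<in>{0<..<T1} - S1. \<forall>i.
        ((\<lambda>s. \<theta>1 s i) has_real_derivative (\<omega> i + z i * (1 - cos (\<theta>1 t i)) * u1 t)) (at t)"
    using t1 unfolding sniper_trajectory_def by blast
  obtain S2 where S2: "finite S2" and D2: "\<forall>t\<in>{0<..<T2} - S2. \<forall>i.
        ((\<lambda>s. \<theta>2 s i) has_real_derivative (\<omega> i + z i * (1 - cos (\<theta>2 t i)) * u2 t)) (at t)"
    using t2 unfolding sniper_trajectory_def by blast
  have C1: "\<forall>i. continuous_on {0..T1} (\<lambda>t. \<theta>1 t i)" using t1 unfolding sniper_trajectory_def by blast
  have C2: "\<forall>i. continuous_on {0..T2} (\<lambda>t. \<theta>2 t i)" using t2 unfolding sniper_trajectory_def by blast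
  let ?th = "\<lambda>t. if t \<le> T1 then \<theta>1 t else \<theta>2 (t - T1)"
  let ?u = "\<lambda>t. if t \<le> T1 then u1 t else u2 (t - T1)"
  have cont: "continuous_on {0..T1+T2} (\<lambda>t. ?th t i)" for i
  proof -
    have U: "{0..T1+T2} = {0..T1} \<union> {T1..T1+T2}" using T1 T2 by auto
    have a: "continuous_on {0..T1} (\<lambda>t. ?th t i)"
      using C1 by (rule_tac continuous_on_eq[of _ "\<lambda>t. \<theta>1 t i"]) auto
    have "continuous_on {T1..T1+T2} (\<lambda>t. \<theta>2 (t - T1) i)"
      by (rule continuous_on_compose2[of "{0..T2}" "\<lambda>s. \<theta>2 s i"]) (use C2 in \<open>auto intro!: continuous_intros\<close>)
    hence b: "continuous_on {T1..T1+T2} (\<lambda>t. ?th t i)"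
      by (rule continuous_on_eq) (use eq in auto)
    show ?thesis unfolding U by (rule continuous_on_closed_Un[OF _ _ a b]) auto
  qed
  define S where "S = S1 \<union> {T1} \<union> (\<lambda>s. s + T1) ` S2"
  have "finite S" unfolding S_def using S1 S2 by auto
  moreover have "\<forall>t\<in>{0<..<T1+T2} - S. \<forall>i.
        ((\<lambda>s. ?th s i) has_real_derivative (\<omega> i + z i * (1 - cos (?th t i)) * ?u t)) (at t)"
  proof (intro ballI allI)
    fix t i assume t: "t \<in> {0<..<T1+T2} - S"
    show "((\<lambda>s. ?th s i) has_real_derivative (\<omega> i + z i * (1 - cos (?th t i)) * ?u t)) (at t)"
    proof (cases "t < T1")
      case True
      hence "t \<in> {0<..<T1} - S1" using t unfolding S_def by auto
      hence d: "((\<lambda>s. \<theta>1 s i) has_real_derivative (\<omega> i + z i * (1 - cos (\<theta>1 t i)) * u1 t)) (at t)"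
        using D1 by blast
      have "((\<lambda>s. ?th s i) has_real_derivative (\<omega> i + z i * (1 - cos (\<theta>1 t i)) * u1 t)) (at t)"
        by (rule has_field_derivative_transform_within_open[OF d, of "{..<T1}"]) (use True in auto)
      thus ?thesis using True by simp
    next
      case False
      hence tT: "t > T1" using t unfolding S_def by auto
      have "t - T1 \<notin> S2" using t unfolding S_def by force
      hence "t - T1 \<in> {0<..<T2} - S2" using t tT by auto
      hence d: "((\<lambda>s. \<theta>2 s i) has_real_derivative (\<omega> i + z i * (1 - cos (\<theta>2 (t - T1) i)) * u2 (t - T1))) (at (t + (- T1)))"
        using D2 by simp
      have d2: "((\<lambda>s. \<theta>2 (s + (- T1)) i) has_real_derivative (\<omega> i + z i * (1 - cos (\<theta>2 (t - T1) i)) * u2 (t - T1))) (at t)"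
        using d unfolding DERIV_shift by simp
      have "((\<lambda>s. ?th s i) has_real_derivative (\<omega> i + z i * (1 - cos (\<theta>2 (t - T1) i)) * u2 (t - T1))) (at t)"
        by (rule has_field_derivative_transform_within_open[OF d2, of "{T1<..}"]) (use tT in auto)
      thus ?thesis using tT by simp
    qed
  qed
  ultimately show ?thesis unfolding sniper_trajectory_def using cont by blast
qed



fun flowall :: "('n \<Rightarrow> real) \<Rightarrow> (real \<times> real) list \<Rightarrow> ('n \<Rightarrow> real) \<Rightarrow> ('n \<Rightarrow> real)" where
  "flowall w [] x = x"
| "flowall w (ct # s) x = flowall w s (\<lambda>i. Fl (w i) (fst ct) (snd ct) (x i))"

lemma Fl_isCont: "w > 0 \<Longrightarrow> w\<^sup>2 + 4 * c > 0 \<Longrightarrow> isCont (\<lambda>t. Fl w c t x) t"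
  using Fl_deriv DERIV_isCont by blast

lemma seg_traj:
  assumes pos: "\<forall>i. \<omega> i > 0" and zz: "\<forall>i. z i = 2 / \<omega> i"
    and cc: "\<forall>i. (\<omega> i)\<^sup>2 + 4 * c > 0" and tau: "\<tau> \<ge> 0"
  shows "admissible_control \<tau> (\<lambda>_. c) \<and> sniper_trajectory \<omega> z (\<lambda>_. c) \<tau> (\<lambda>t i. Fl (\<omega> i) c t (x i))"
proof
  show "admissible_control \<tau> (\<lambda>_. c)"
    unfolding admissible_control_def using tau by (intro exI[of _ "{0, \<tau>}"]) auto
  have "continuous_on {0..\<tau>} (\<lambda>t. Fl (\<omega> i) c t (x i))" for i
    using Fl_isCont pos cc by (simp add: continuous_at_imp_continuous_on)
  moreover have "((\<lambda>s. Fl (\<omega> i) c s (x i)) has_real_derivative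
           (\<omega> i + z i * (1 - cos (Fl (\<omega> i) c t (x i))) * c)) (at t)" for t i
    using Fl_deriv[of "\<omega> i" c "x i" t] pos cc zz by simp
  ultimately show "sniper_trajectory \<omega> z (\<lambda>_. c) \<tau> (\<lambda>t i. Fl (\<omega> i) c t (x i))"
    unfolding sniper_trajectory_def by (intro conjI exI[of _ "{}"]) auto
qed

lemma traj:
  assumes pos: "\<forall>i. \<omega> i > 0" and zz: "\<forall>i. z i = 2 / \<omega> i"
    and segs: "\<forall>p\<in>set segs. snd p \<ge> 0 \<and> (\<forall>i. (\<omega> i)\<^sup>2 + 4 * fst p > 0)"
  shows "\<exists>u \<theta>. admissible_control (sum_list (map snd segs)) u \<and>
           sniper_trajectory \<omega> z u (sum_list (map snd segs)) \<theta> \<and>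
           \<theta> 0 = x \<and> \<theta> (sum_list (map snd segs)) = flowall \<omega> segs x"
  using segs
proof (induction segs arbitrary: x)
  case Nil
  have "admissible_control 0 (\<lambda>_. 0)"
    unfolding admissible_control_def by (intro exI[of _ "{0}"]) auto
  moreover have "sniper_trajectory \<omega> z (\<lambda>_. 0) 0 (\<lambda>_. x)"
    unfolding sniper_trajectory_def by (intro conjI allI exI[of _ "{}"]) auto
  ultimately show ?case by auto
next
  case (Cons p segs)
  obtain c \<tau> where p: "p = (c, \<tau>)" by force
  have tau: "\<tau> \<ge> 0" and cc: "\<forall>i. (\<omega> i)\<^sup>2 + 4 * c > 0" using Cons.prems p by auto
  define y where "y = (\<lambda>i. Fl (\<omega> i) c \<tau> (x i))"
  obtain u2 \<theta>2 where h2: "admissible_control (sum_list (map snd segs)) u2"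
     "sniper_trajectory \<omega> z u2 (sum_list (map snd segs)) \<theta>2"
     "\<theta>2 0 = y" "\<theta>2 (sum_list (map snd segs)) = flowall \<omega> segs y"
    using Cons.IH[of y] Cons.prems by auto
  have T2: "sum_list (map snd segs) \<ge> 0" using Cons.prems by (auto intro!: sum_list_nonneg)
  note s1 = seg_traj[OF pos zz cc tau, of x]
  let ?T2 = "sum_list (map snd segs)"
  let ?u = "\<lambda>t. if t \<le> \<tau> then c else u2 (t - \<tau>)"
  let ?th = "\<lambda>t. if t \<le> \<tau> then (\<lambda>i. Fl (\<omega> i) c t (x i)) else \<theta>2 (t - \<tau>)"
  have A: "admissible_control (\<tau> + ?T2) ?u"
    using concat_adm[of \<tau> "\<lambda>_. c" ?T2 u2] s1 h2 by simp
  have B: "sniper_trajectory \<omega> z ?u (\<tau> + ?T2) ?th"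
    using concat_traj[of \<omega> z "\<lambda>_. c" \<tau> "\<lambda>t i. Fl (\<omega> i) c t (x i)" u2 ?T2 \<theta>2] s1 h2 tau T2
    unfolding y_def by simp
  have C: "?th 0 = x" using tau Fl_0 pos cc by auto
  have D: "?th (\<tau> + ?T2) = flowall \<omega> (p # segs) x"
  proof (cases "?T2 = 0")
    case True thus ?thesis using h2 p unfolding y_def by auto
  next
    case False thus ?thesis using h2 p T2 unfolding y_def by auto
  qed
  have E: "sum_list (map snd (p # segs)) = \<tau> + ?T2" using p by simp
  show ?case unfolding E using A B C D by blast
qed

lemma flow_bound:
  assumes pos: "\<forall>i. \<omega> i > 0"
  shows "\<forall>p\<in>set segs. \<forall>i. (\<omega> i)\<^sup>2 + 4 * fst p > 0 \<Longrightarrow>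
    \<bar>flowall \<omega> segs x i - x i - (\<Sum>p\<leftarrow>segs. nu (\<omega> i) (fst p) * snd p)\<bar> \<le> 2 * pi * length segs"
proof (induction segs arbitrary: x)
  case Nil thus ?case by simp
next
  case (Cons p segs)
  define y where "y = (\<lambda>i. Fl (\<omega> i) (fst p) (snd p) (x i))"
  have IH: "\<bar>flowall \<omega> segs y i - y i - (\<Sum>p\<leftarrow>segs. nu (\<omega> i) (fst p) * snd p)\<bar> \<le> 2 * pi * length segs"
    using Cons by auto
  have "\<bar>y i - x i - nu (\<omega> i) (fst p) * snd p\<bar> \<le> 2 * pi"
    unfolding y_def using Fl_bound pos Cons.prems by auto
  thus ?case using IH unfolding y_def by (simp add: algebra_simps)
qed

lemma flow_cont:
  fixes tf :: "'b \<Rightarrow> 'a::topological_space \<Rightarrow> real"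
  assumes pos: "\<forall>i. \<omega> i > 0"
    and cf: "\<forall>b\<in>set bl. \<forall>i. (\<omega> i)\<^sup>2 + 4 * cf b > 0"
    and tf: "\<forall>b. continuous_on UNIV (tf b)"
  shows "\<forall>i. continuous_on UNIV (\<lambda>y. x y i) \<Longrightarrow>
     continuous_on UNIV (\<lambda>y. flowall \<omega> (map (\<lambda>b. (cf b, tf b y)) bl) (x y) i)"
  using cf
proof (induction bl arbitrary: x i)
  case Nil thus ?case by simp
next
  case (Cons b bl)
  have "\<forall>i. continuous_on UNIV (\<lambda>y. Fl (\<omega> i) (cf b) (tf b y) (x y i))"
  proof
    fix i show "continuous_on UNIV (\<lambda>y. Fl (\<omega> i) (cf b) (tf b y) (x y i))"
      by (rule Fl_cont) (use pos Cons.prems tf in auto)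
  qed
  thus ?case using Cons.IH[of "\<lambda>y i. Fl (\<omega> i) (cf b) (tf b y) (x y i)"] Cons.prems by simp
qed



lemma power_sums_zero:
  fixes \<mu> \<beta> :: "'n::finite \<Rightarrow> real"
  assumes inj: "inj \<beta>" and pos: "\<forall>j. \<beta> j > 0" and z: "\<forall>k::nat. (\<Sum>j\<in>UNIV. \<mu> j * \<beta> j ^ k) = 0"
  shows "\<mu> j0 = 0"
proof (rule ccontr)
  assume nz: "\<mu> j0 \<noteq> 0"
  define S where "S = {j. \<mu> j \<noteq> 0}"
  have S: "finite S" "S \<noteq> {}" using nz unfolding S_def by auto
  have "Max (\<beta> ` S) \<in> \<beta> ` S" using S by simp
  then obtain jm where jm: "jm \<in> S" "\<beta> jm = Max (\<beta> ` S)" by force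
  have le: "\<forall>j\<in>S. \<beta> j \<le> \<beta> jm" using jm S by simp
  have bm: "\<beta> jm > 0" using pos by auto
  have sumS: "(\<Sum>j\<in>S. \<mu> j * (\<beta> j / \<beta> jm) ^ k) = 0" for k
  proof -
    have "(\<Sum>j\<in>UNIV. \<mu> j * \<beta> j ^ k) = (\<Sum>j\<in>S. \<mu> j * \<beta> j ^ k)"
      by (rule sum.mono_neutral_right) (auto simp: S_def)
    hence "(\<Sum>j\<in>S. \<mu> j * \<beta> j ^ k) = 0" using z by simp
    hence "(\<Sum>j\<in>S. \<mu> j * \<beta> j ^ k) / \<beta> jm ^ k = 0" by simp
    thus ?thesis by (simp add: sum_divide_distrib power_divide)
  qed
  have lim: "(\<lambda>k. \<Sum>j\<in>S. \<mu> j * (\<beta> j / \<beta> jm) ^ k) \<longlonglongrightarrow> (\<Sum>j\<in>S. if j = jm then \<mu> j else 0)"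
  proof (rule tendsto_sum)
    fix j assume j: "j \<in> S"
    show "(\<lambda>k. \<mu> j * (\<beta> j / \<beta> jm) ^ k) \<longlonglongrightarrow> (if j = jm then \<mu> j else 0)"
    proof (cases "j = jm")
      case True thus ?thesis using bm by simp
    next
      case False
      hence "\<beta> j \<noteq> \<beta> jm" using inj unfolding inj_def by blast
      moreover have "\<beta> j \<le> \<beta> jm" using le j by blast
      ultimately have lt: "\<beta> j < \<beta> jm" by linarith
      have "0 < \<beta> j / \<beta> jm" using pos bm by simp
      moreover have "\<beta> j / \<beta> jm < 1" using lt bm by simp
      ultimately have "norm (\<beta> j / \<beta> jm) < 1" by simp
      hence "(\<lambda>k. (\<beta> j / \<beta> jm) ^ k) \<longlonglongrightarrow> 0" by (rule LIMSEQ_power_zero)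
      hence "(\<lambda>k. \<mu> j * (\<beta> j / \<beta> jm) ^ k) \<longlonglongrightarrow> 0" by (rule tendsto_mult_right_zero)
      thus ?thesis using False by simp
    qed
  qed
  have "(\<Sum>j\<in>S. if j = jm then \<mu> j else 0) = \<mu> jm" using jm S by simp
  with lim sumS have "(\<lambda>k. 0) \<longlonglongrightarrow> \<mu> jm" by simp
  hence "\<mu> jm = 0" using LIMSEQ_unique tendsto_const by blast
  thus False using jm unfolding S_def by simp
qed

lemma span_nuv:
  fixes \<omega> :: "'n::finite \<Rightarrow> real"
  assumes inj: "inj \<omega>" and pos: "\<forall>i. \<omega> i > 0"
  shows "span ((\<lambda>c. \<chi> j. nu (\<omega> j) c) ` {c. \<forall>j. (\<omega> j)\<^sup>2 + 4 * c > 0}) = UNIV"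
proof (rule ccontr)
  let ?V = "(\<lambda>c. \<chi> j. nu (\<omega> j) c) ` {c. \<forall>j. (\<omega> j)\<^sup>2 + 4 * c > 0}"
  assume "span ?V \<noteq> UNIV"
  then obtain a :: "real^'n" where a: "a \<noteq> 0" "span ?V \<subseteq> {x. a \<bullet> x = 0}"
    by (metis span_not_univ_subset_hyperplane)
  define m where "m = Max (range (\<lambda>j. - (\<omega> j)\<^sup>2 / 4))"
  have mj: "- (\<omega> j)\<^sup>2 / 4 \<le> m" for j unfolding m_def by (rule Max_ge) auto
  have Cm: "\<And>c j. c > m \<Longrightarrow> (\<omega> j)\<^sup>2 + 4 * c > 0"
  proof -
    fix c j assume "c > m" thus "(\<omega> j)\<^sup>2 + 4 * c > 0" using mj[of j] by linarith
  qed
  have zero0: "(\<Sum>j\<in>UNIV. a$j * ((\<omega> j)\<^sup>2 + 4 * c) powr (1/2)) = 0" if c: "c > m" for c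
  proof -
    have "(\<chi> j. nu (\<omega> j) c) \<in> span ?V" using Cm[OF c] by (intro span_base) auto
    hence "a \<bullet> (\<chi> j. nu (\<omega> j) c) = 0" using a by auto
    thus ?thesis unfolding inner_vec_def nu_def using Cm[OF c]
      by (simp add: powr_half_sqrt less_imp_le)
  qed
  have zk: "\<forall>c>m. (\<Sum>j\<in>UNIV. a$j * ((\<omega> j)\<^sup>2 + 4 * c) powr (1/2 - real k)) = 0" for k
  proof (induction k)
    case 0 thus ?case using zero0 by simp
  next
    case (Suc k)
    show ?case
    proof (intro allI impI)
      fix c assume c: "c > m"
      let ?f = "\<lambda>c. \<Sum>j\<in>UNIV. a$j * ((\<omega> j)\<^sup>2 + 4 * c) powr (1/2 - real k)"
      have d: "(?f has_real_derivative
          (\<Sum>j\<in>UNIV. a$j * ((1/2 - real k) * ((\<omega> j)\<^sup>2 + 4 * c) powr (1/2 - real k - 1) * 4))) (at c)"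
      proof (rule DERIV_sum)
        fix j :: 'n
        have p: "(\<omega> j)\<^sup>2 + 4 * c > 0" using Cm[OF c] .
        have "((\<lambda>c. (\<omega> j)\<^sup>2 + 4 * c) has_real_derivative 4) (at c)"
          by (auto intro!: derivative_eq_intros)
        from DERIV_chain2[OF has_real_derivative_powr[OF p, of "1/2 - real k"] this]
        show "((\<lambda>c. a$j * ((\<omega> j)\<^sup>2 + 4 * c) powr (1/2 - real k)) has_real_derivative
             a$j * ((1/2 - real k) * ((\<omega> j)\<^sup>2 + 4 * c) powr (1/2 - real k - 1) * 4)) (at c)"
          by (rule DERIV_cmult)
      qed
      have d0: "(?f has_real_derivative 0) (at c)"
        by (rule has_field_derivative_transform_within_open[where S="{m<..}" and f="\<lambda>_. 0"])
           (use c Suc in auto)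
      have "(\<Sum>j\<in>UNIV. a$j * ((1/2 - real k) * ((\<omega> j)\<^sup>2 + 4 * c) powr (1/2 - real k - 1) * 4)) = 0"
        using DERIV_unique[OF d d0] .
      hence "(4 * (1/2 - real k)) * (\<Sum>j\<in>UNIV. a$j * ((\<omega> j)\<^sup>2 + 4 * c) powr (1/2 - real k - 1)) = 0"
        by (simp add: sum_distrib_left algebra_simps)
      moreover have "4 * (1/2 - real k) \<noteq> 0"
      proof -
        have "2 * k \<noteq> (1::nat)" by presburger
        hence "real (2 * k) \<noteq> 1" by (metis of_nat_1 of_nat_eq_iff)
        thus ?thesis by simp
      qed
      ultimately have "(\<Sum>j\<in>UNIV. a$j * ((\<omega> j)\<^sup>2 + 4 * c) powr (1/2 - real k - 1)) = 0" by simp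
      thus "(\<Sum>j\<in>UNIV. a$j * ((\<omega> j)\<^sup>2 + 4 * c) powr (1/2 - real (Suc k))) = 0"
        by (simp add: algebra_simps)
    qed
  qed
  define X where "X j = (\<omega> j)\<^sup>2 + 4 * (m + 1)" for j
  have Xp: "X j > 0" for j unfolding X_def using Cm[of "m+1"] by simp
  have ps: "(\<Sum>j\<in>UNIV. (a$j * sqrt (X j)) * (1 / X j) ^ k) = 0" for k
  proof -
    have "(\<Sum>j\<in>UNIV. a$j * (X j) powr (1/2 - real k)) = 0" using zk[of k, rule_format, of "m+1"] unfolding X_def by simp
    moreover have "(X j) powr (1/2 - real k) = sqrt (X j) * (1 / X j) ^ k" for j
      using Xp[of j] by (simp add: powr_diff powr_realpow powr_half_sqrt less_imp_le power_one_over)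
    ultimately show ?thesis by (simp add: mult.assoc)
  qed
  have injX: "inj (\<lambda>j. 1 / X j)"
  proof (rule injI)
    fix i j assume "1 / X i = 1 / X j"
    hence "(\<omega> i)\<^sup>2 = (\<omega> j)\<^sup>2" unfolding X_def by simp
    hence "\<omega> i = \<omega> j" using pos by (metis less_imp_le power2_eq_iff_nonneg)
    thus "i = j" using inj by (auto dest: injD)
  qed
  have "a$j = 0" for j
  proof -
    have "a$j * sqrt (X j) = 0"
      by (rule power_sums_zero[OF injX, of "\<lambda>j. a$j * sqrt (X j)"]) (use Xp ps in auto)
    thus ?thesis using Xp[of j] by simp
  qed
  hence "a = 0" by (simp add: vec_eq_iff)
  thus False using a by simp
qed



lemma coef_exists:
  fixes B :: "(real^'n) set"
  assumes fin: "finite B" and sp: "span B = UNIV"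
  obtains \<alpha> :: "'n \<Rightarrow> real^'n \<Rightarrow> real" where "\<And>y. (\<Sum>v\<in>B. (\<Sum>i\<in>UNIV. y$i * \<alpha> i v) *\<^sub>R v) = y"
proof -
  have "\<forall>i. \<exists>u. (\<Sum>v\<in>B. u v *\<^sub>R v) = axis i 1"
    using span_finite[OF fin] sp by (metis (no_types, lifting) UNIV_I rangeE)
  then obtain \<alpha> where \<alpha>: "\<And>i. (\<Sum>v\<in>B. \<alpha> i v *\<^sub>R v) = axis i 1" by metis
  have "(\<Sum>v\<in>B. (\<Sum>i\<in>UNIV. y$i * \<alpha> i v) *\<^sub>R v) = y" for y
  proof (subst vec_eq_iff, intro allI)
    fix j
    have "(\<Sum>v\<in>B. (\<Sum>i\<in>UNIV. y$i * \<alpha> i v) *\<^sub>R v) $ j = (\<Sum>v\<in>B. \<Sum>i\<in>UNIV. y$i * (\<alpha> i v * v$j))"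
      by (simp add: sum_distrib_right mult.assoc)
    also have "\<dots> = (\<Sum>i\<in>UNIV. y$i * (\<Sum>v\<in>B. \<alpha> i v * v$j))"
      by (simp add: sum.swap[of _ B] sum_distrib_left)
    also have "\<dots> = (\<Sum>i\<in>UNIV. y$i * (axis i 1 $ j))"
    proof -
      have "(\<Sum>v\<in>B. \<alpha> i v * v$j) = axis i 1 $ j" for i
        using arg_cong[OF \<alpha>[of i], of "\<lambda>x. x $ j"] by simp
      thus ?thesis by simp
    qed
    also have "\<dots> = y$j" by (simp add: axis_def if_distrib cong: if_cong)
    finally show "(\<Sum>v\<in>B. (\<Sum>i\<in>UNIV. y$i * \<alpha> i v) *\<^sub>R v) $ j = y $ j" .
  qed
  thus ?thesis using that by blast
qed

lemma floor_approx: "\<exists>m::int. \<bar>d + 2 * pi * m - x\<bar> \<le> 2 * pi"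
proof -
  define m where "m = \<lfloor>(x - d) / (2 * pi)\<rfloor>"
  have "of_int m \<le> (x - d) / (2 * pi)" "(x - d) / (2 * pi) < of_int m + 1"
    unfolding m_def by linarith+
  hence "2 * pi * m \<le> x - d" "x - d < 2 * pi * m + 2 * pi"
    using pi_gt_zero by (simp_all add: field_simps)
  thus ?thesis by (intro exI[of _ m]) auto
qed


theorem mainTheorem2:
  fixes \<omega> z :: "'n::finite \<Rightarrow> real"
  assumes "inj \<omega>"
    and "\<forall>i. \<omega> i > 0"
    and "\<forall>i. z i = 2 / \<omega> i"
  shows "\<forall>\<Theta>0 \<Theta>1 :: 'n \<Rightarrow> real. \<exists>T \<ge> 0. \<exists>u \<theta>.
           admissible_control T u \<and> sniper_trajectory \<omega> z u T \<theta> \<and>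
           torus_eq (\<theta> 0) \<Theta>0 \<and> torus_eq (\<theta> T) \<Theta>1"
proof (intro allI)
  fix \<Theta>0 \<Theta>1 :: "'n \<Rightarrow> real"
  have pos: "\<forall>i. \<omega> i > 0" using assms(2) .
  have zz: "\<forall>i. z i = 2 / \<omega> i" using assms(3) .
  define Cs where "Cs = {c. \<forall>j. (\<omega> j)\<^sup>2 + 4 * c > 0}"
  define nuv where "nuv c = (\<chi> j. nu (\<omega> j) c)" for c
  define V where "V = nuv ` Cs"
  have spV: "span V = UNIV" using span_nuv[OF assms(1) pos] unfolding V_def nuv_def Cs_def .
  obtain B where B: "B \<subseteq> V" "independent B" "V \<subseteq> span B" by (rule basis_exists)
  have finB: "finite B" using B(2) by (rule finiteI_independent)
  have "span V \<subseteq> span B" by (rule span_minimal[OF B(3) subspace_span])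
  hence spB: "span B = UNIV" using spV by auto
  obtain \<alpha> where \<alpha>: "\<And>y. (\<Sum>v\<in>B. (\<Sum>i\<in>UNIV. y$i * \<alpha> i v) *\<^sub>R v) = y"
    using coef_exists[OF finB spB] by blast
  obtain bl where bl: "set bl = B" "distinct bl" using finite_distinct_list[OF finB] by blast
  define cf where "cf v = (SOME c. c \<in> Cs \<and> nuv c = v)" for v
  have cf: "cf v \<in> Cs \<and> nuv (cf v) = v" if "v \<in> B" for v
  proof -
    have "\<exists>c. c \<in> Cs \<and> nuv c = v" using that B(1) unfolding V_def by auto
    thus ?thesis unfolding cf_def by (rule someI_ex)
  qed
  define M where "M = 2 * pi * length bl"
  define Aa where "Aa = (\<Sum>v\<in>B. \<Sum>i\<in>UNIV. \<bar>\<alpha> i v\<bar>)"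
  define R where "R = (M + 2 * pi) * Aa + 1"
  define w where "w = (\<Sum>v\<in>B. v)"
  define coef where "coef v y = (\<Sum>i\<in>UNIV. y$i * \<alpha> i v)" for v y
  define \<tau> where "\<tau> v y = R + coef v (y - R *\<^sub>R w)" for v y
  have sumtau: "(\<Sum>v\<in>B. \<tau> v y *\<^sub>R v) = y" for y
  proof -
    have "(\<Sum>v\<in>B. \<tau> v y *\<^sub>R v) = (\<Sum>v\<in>B. R *\<^sub>R v) + (\<Sum>v\<in>B. coef v (y - R *\<^sub>R w) *\<^sub>R v)"
      unfolding \<tau>_def by (simp add: scaleR_add_left sum.distrib)
    also have "\<dots> = R *\<^sub>R w + (y - R *\<^sub>R w)"
      unfolding coef_def \<alpha> w_def by (simp add: scaleR_sum_right)
    finally show ?thesis by simp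
  qed
  define E where "E y = flowall \<omega> (map (\<lambda>v. (cf v, \<tau> v y)) bl) \<Theta>0" for y
  have Cs_all: "\<forall>v\<in>set bl. \<forall>i. (\<omega> i)\<^sup>2 + 4 * cf v > 0" using cf bl unfolding Cs_def by auto
  have dev: "\<bar>E y i - \<Theta>0 i - y$i\<bar> \<le> M" for y i
  proof -
    have fb: "\<bar>E y i - \<Theta>0 i - (\<Sum>p\<leftarrow>map (\<lambda>v. (cf v, \<tau> v y)) bl. nu (\<omega> i) (fst p) * snd p)\<bar>
        \<le> 2 * pi * length (map (\<lambda>v. (cf v, \<tau> v y)) bl)"
      unfolding E_def by (rule flow_bound[OF pos]) (use Cs_all in auto)
    have "(\<Sum>p\<leftarrow>map (\<lambda>v. (cf v, \<tau> v y)) bl. nu (\<omega> i) (fst p) * snd p)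
        = (\<Sum>v\<leftarrow>bl. nu (\<omega> i) (cf v) * \<tau> v y)" by (simp add: comp_def)
    also have "\<dots> = (\<Sum>v\<in>B. nu (\<omega> i) (cf v) * \<tau> v y)"
      using bl by (simp add: sum_list_distinct_conv_sum_set)
    also have "\<dots> = (\<Sum>v\<in>B. \<tau> v y * v$i)"
    proof (rule sum.cong)
      fix v assume "v \<in> B"
      hence "nuv (cf v) = v" using cf by blast
      hence "nu (\<omega> i) (cf v) = v $ i" unfolding nuv_def by (metis vec_lambda_beta)
      thus "nu (\<omega> i) (cf v) * \<tau> v y = \<tau> v y * v$i" by simp
    qed simp
    also have "\<dots> = (\<Sum>v\<in>B. \<tau> v y *\<^sub>R v) $ i" by simp
    also have "\<dots> = y$i" using sumtau by simp
    finally show ?thesis using fb unfolding M_def by simp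
  qed
  have contE: "continuous_on UNIV (\<lambda>y. E y i)" for i
    unfolding E_def
    by (rule flow_cont[OF pos Cs_all, rule_format]) (auto simp: \<tau>_def coef_def intro!: continuous_intros)
  have "\<forall>i. \<exists>m::int. \<bar>(\<Theta>1 i - \<Theta>0 i) + 2 * pi * m - R * w$i\<bar> \<le> 2 * pi"
    using floor_approx by blast
  then obtain m :: "'n \<Rightarrow> int" where m: "\<And>i. \<bar>(\<Theta>1 i - \<Theta>0 i) + 2 * pi * m i - R * w$i\<bar> \<le> 2 * pi"
    by metis
  define t0 where "t0 i = (\<Theta>1 i - \<Theta>0 i) + 2 * pi * m i" for i
  define K where "K = cbox (\<chi> i. t0 i - M) (\<chi> i. t0 i + M :: real^'n)"
  define g where "g y = (\<chi> i. t0 i - (E y i - \<Theta>0 i - y$i))" for y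
  have M0: "M \<ge> 0" unfolding M_def by simp
  have Kne: "K \<noteq> {}"
  proof -
    have "(\<chi> i. t0 i) \<in> K" unfolding K_def mem_box_cart using M0 by simp
    thus ?thesis by blast
  qed
  have contg: "continuous_on K g"
    by (rule continuous_on_subset[of UNIV]) (unfold g_def, auto intro!: continuous_intros contE)
  have gK: "g \<in> K \<rightarrow> K"
  proof
    fix y assume "y \<in> K"
    show "g y \<in> K" unfolding K_def mem_box_cart g_def
    proof (intro allI)
      fix i show "(\<chi> i. t0 i - M) $ i \<le> (\<chi> i. t0 i - (E y i - \<Theta>0 i - y $ i)) $ i \<and>
         (\<chi> i. t0 i - (E y i - \<Theta>0 i - y $ i)) $ i \<le> (\<chi> i. t0 i + M) $ i"
        using dev[of y i] by (simp add: abs_le_iff)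
    qed
  qed
  obtain ys where ys: "ys \<in> K" "g ys = ys"
    using brouwer[OF compact_cbox convex_box(1) Kne[unfolded K_def] contg[unfolded K_def] gK[unfolded K_def]]
    unfolding K_def by blast
  have Eys: "E ys i = \<Theta>1 i + 2 * pi * m i" for i
  proof -
    have "g ys $ i = ys $ i" using ys(2) by simp
    hence "t0 i - (E ys i - \<Theta>0 i - ys$i) = ys$i" unfolding g_def by simp
    thus ?thesis unfolding t0_def by simp
  qed
  have taupos: "\<tau> v ys \<ge> 0" if v: "v \<in> B" for v
  proof -
    define zv where "zv = ys - R *\<^sub>R w"
    have zb: "\<bar>zv$i\<bar> \<le> M + 2 * pi" for i
    proof -
      have "t0 i - M \<le> ys $ i \<and> ys $ i \<le> t0 i + M" using ys(1) unfolding K_def mem_box_cart by simp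
      hence "\<bar>ys$i - t0 i\<bar> \<le> M" by (simp add: abs_le_iff)
      thus ?thesis using m[of i] unfolding zv_def t0_def by (simp add: abs_le_iff)
    qed
    have "\<bar>coef v zv\<bar> \<le> (\<Sum>i\<in>UNIV. \<bar>zv$i * \<alpha> i v\<bar>)" unfolding coef_def by (rule sum_abs)
    also have "\<dots> \<le> (\<Sum>i\<in>UNIV. (M + 2 * pi) * \<bar>\<alpha> i v\<bar>)"
      by (rule sum_mono) (simp add: abs_mult mult_right_mono zb)
    also have "\<dots> = (M + 2 * pi) * (\<Sum>i\<in>UNIV. \<bar>\<alpha> i v\<bar>)" by (simp add: sum_distrib_left)
    also have "\<dots> \<le> (M + 2 * pi) * Aa"
    proof (rule mult_left_mono)
      show "(\<Sum>i\<in>UNIV. \<bar>\<alpha> i v\<bar>) \<le> Aa" unfolding Aa_def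
        by (rule member_le_sum[OF v _ finB, of "\<lambda>v. \<Sum>i\<in>UNIV. \<bar>\<alpha> i v\<bar>"]) (auto intro: sum_nonneg)
      show "0 \<le> M + 2 * pi" using M0 pi_gt_zero by linarith
    qed
    finally have "\<bar>coef v zv\<bar> \<le> (M + 2 * pi) * Aa" .
    moreover have "\<tau> v ys = R + coef v zv" unfolding \<tau>_def zv_def by simp
    moreover have "R = (M + 2 * pi) * Aa + 1" unfolding R_def by simp
    ultimately show ?thesis by linarith
  qed
  define segs where "segs = map (\<lambda>v. (cf v, \<tau> v ys)) bl"
  have segsok: "\<forall>p\<in>set segs. snd p \<ge> 0 \<and> (\<forall>i. (\<omega> i)\<^sup>2 + 4 * fst p > 0)"
    unfolding segs_def using taupos Cs_all bl by auto
  obtain u \<theta> where ut: "admissible_control (sum_list (map snd segs)) u"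
    "sniper_trajectory \<omega> z u (sum_list (map snd segs)) \<theta>"
    "\<theta> 0 = \<Theta>0" "\<theta> (sum_list (map snd segs)) = flowall \<omega> segs \<Theta>0"
    using traj[OF pos zz segsok, of \<Theta>0] by blast
  have T0: "sum_list (map snd segs) \<ge> 0" using segsok by (auto intro!: sum_list_nonneg)
  have tq0: "torus_eq (\<theta> 0) \<Theta>0" unfolding torus_eq_def ut(3) by (auto intro: exI[of _ 0])
  have tq1: "torus_eq (\<theta> (sum_list (map snd segs))) \<Theta>1"
    unfolding torus_eq_def ut(4)
  proof
    fix i
    have "flowall \<omega> segs \<Theta>0 i - \<Theta>1 i = 2 * pi * m i" using Eys[of i] unfolding E_def segs_def by simp
    thus "\<exists>k::int. flowall \<omega> segs \<Theta>0 i - \<Theta>1 i = 2 * pi * real_of_int k" by blast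
  qed
  show "\<exists>T \<ge> 0. \<exists>u \<theta>. admissible_control T u \<and> sniper_trajectory \<omega> z u T \<theta> \<and>
           torus_eq (\<theta> 0) \<Theta>0 \<and> torus_eq (\<theta> T) \<Theta>1"
    using T0 ut(1,2) tq0 tq1 by blast
qed


end
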